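(* Let $\|\cdot\|_W$ be the wedge norm on $\mathbb{R}^p$, with allowed sets $S=\{1,\dots,s\}$, $s\in\{1,\dots,p-1\}$, and associated norms $\Omega^{S^c}$ as in the context. Fix $J\subset\{1,\dots,p\}$ and let $g$ be the gauge norm described in the context. Then $g(\beta)=\|\beta\|_1$ for all $\beta\in\mathbb{R}^p$.
   Context: Let $\mathcal{A}:=\{a\in\mathbb{R}^p: a_j>0 \ \forall j,\ a_1\ge a_2\ge\dots\ge a_p\}$ and $\|\beta\|_W:=\inf_{a\in\mathcal{A}}\frac12\sum_{j=1}^p\big(\beta_j^2/a_j+a_j\big)$. For $S=\{1,\dots,s\}$ let $\mathcal{A}_{S^c}:=\{(a_j)_{j\in S^c}:a\in\mathcal{A}\}$ and $\Omega^{S^c}(\beta_{S^c}):=\inf_{a\in\mathcal{A}_{S^c}}\frac12\sum_{j\in S^c}\big(\beta_j^2/a_j+a_j\big)$; then $\|\beta_S\|_W+\Omega^{S^c}(\beta_{S^c})\le\|\beta\|_W$ for all $\beta$, and $\Upsilon_S(\beta):=\|\beta_S\|_W+\Omega^{S^c}(\beta_{S^c})$. Here $\beta_S$ has entries $\beta_j1\{j\in S\}$. Let $\beta_{f(J)}:=\beta_J-\beta_{J^{c}}$, $\mathrm{flip}_J(B):=\{\beta_{f(J)}:\beta\in B\}$, $\overline{B}:=\bigcup_{S\text{ allowed}}\{\beta:\Upsilon_S(\beta)\le1\}$, $B_g:=\mathrm{Conv}(\overline{B}\cup\mathrm{flip}_J(\overline{B}))$, and $g(x):=\inf\{t>0:x\in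 tB_g\}$. *)

theory Defs
  imports "HOL-Analysis.Analysis"
begin

text \<open>Vectors of R^p are represented as functions nat => real whose support lies in {1..p}.\<close>

definition Rp :: "nat \<Rightarrow> (nat \<Rightarrow> real) set" where
  "Rp p = {\<beta>. \<forall>j. j \<notin> {1..p} \<longrightarrow> \<beta> j = 0}"

definition wedge_cone :: "nat \<Rightarrow> (nat \<Rightarrow> real) set" where
  "wedge_cone p = {a. (\<forall>j\<in>{1..p}. a j > 0) \<and>
                       (\<forall>i j. 1 \<le> i \<longrightarrow> i \<le> j \<longrightarrow> j \<le> p \<longrightarrow> a j \<le> a i)}"

definition wedge_norm :: "nat \<Rightarrow> (nat \<Rightarrow> real) \<Rightarrow> real" where
  "wedge_norm p \<beta> = Inf {(1/2) * (\<Sum>j=1..p. \<beta> j ^ 2 / a j + a j) | a. a \<in> wedge_cone p}"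

definition restr :: "nat set \<Rightarrow> (nat \<Rightarrow> real) \<Rightarrow> (nat \<Rightarrow> real)" where
  "restr S \<beta> = (\<lambda>j. if j \<in> S then \<beta> j else 0)"

text \<open>Omega^{S^c}, S = {1..s}: infimum over A_{S^c} = projections of A onto S^c = {s+1..p}.\<close>
definition Omega_c :: "nat \<Rightarrow> nat \<Rightarrow> (nat \<Rightarrow> real) \<Rightarrow> real" where
  "Omega_c p s \<beta> = Inf {(1/2) * (\<Sum>j\<in>{s+1..p}. \<beta> j ^ 2 / a j + a j) | a. a \<in> wedge_cone p}"

definition Upsilon :: "nat \<Rightarrow> nat \<Rightarrow> (nat \<Rightarrow> real) \<Rightarrow> real" where
  "Upsilon p s \<beta> = wedge_norm p (restr {1..s} \<beta>) + Omega_c p s \<beta>"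

definition flip :: "nat set \<Rightarrow> (nat \<Rightarrow> real) \<Rightarrow> (nat \<Rightarrow> real)" where
  "flip J \<beta> = (\<lambda>j. restr J \<beta> j - restr (- J) \<beta> j)"

text \<open>Allowed sets are S = {1..s}, s in {1..p-1}.\<close>
definition Bbar :: "nat \<Rightarrow> (nat \<Rightarrow> real) set" where
  "Bbar p = (\<Union>s\<in>{1..p-1}. {\<beta> \<in> Rp p. Upsilon p s \<beta> \<le> 1})"

definition conv_comb :: "(nat \<Rightarrow> real) set \<Rightarrow> (nat \<Rightarrow> real) set" where
  "conv_comb X = {y. \<exists>(n::nat) c v. (\<forall>i<n. c i \<ge> 0 \<and> v i \<in> X) \<and> (\<Sum>i<n. c i) = 1 \<and>
                         y = (\<lambda>j. \<Sum>i<n. c i * v i j)}"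

definition Bg :: "nat \<Rightarrow> nat set \<Rightarrow> (nat \<Rightarrow> real) set" where
  "Bg p J = conv_comb (Bbar p \<union> flip J ` Bbar p)"

definition gauge_g :: "nat \<Rightarrow> nat set \<Rightarrow> (nat \<Rightarrow> real) \<Rightarrow> real" where
  "gauge_g p J x = Inf {t. t > 0 \<and> x \<in> (\<lambda>v. (\<lambda>j. t * v j)) ` Bg p J}"

end

theory Submission
  imports Defs
begin

lemma amgm: assumes "(a::real) > 0" shows "\<bar>b\<bar> \<le> (b^2/a + a)/2"
proof -
  have "0 \<le> (\<bar>b\<bar> - a)^2" by simp
  hence "2*a*\<bar>b\<bar> \<le> b^2 + a^2" by (simp add: power2_eq_square algebra_simps)
  moreover have "b^2/a + a = (b^2 + a^2)/a" using assms by (simp add: field_simps power2_eq_square)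
  ultimately show ?thesis using assms by (simp add: field_simps)
qed

lemma sum_amgm:
  assumes "a \<in> wedge_cone p" "A \<subseteq> {1..p}"
  shows "(\<Sum>j\<in>A. \<bar>\<beta> j\<bar>) \<le> (1/2)*(\<Sum>j\<in>A. \<beta> j^2/a j + a j)"
proof -
  have fin: "finite A" using assms(2) finite_subset by blast
  have "(\<Sum>j\<in>A. \<bar>\<beta> j\<bar>) \<le> (\<Sum>j\<in>A. (1/2)*(\<beta> j^2/a j + a j))"
  proof (rule sum_mono)
    fix j assume "j \<in> A"
    hence "a j > 0" using assms unfolding wedge_cone_def by auto
    thus "\<bar>\<beta> j\<bar> \<le> (1/2)*(\<beta> j^2/a j + a j)" using amgm[of "a j" "\<beta> j"] by simp
  qed
  thus ?thesis by (simp add: sum_distrib_left)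
qed

lemma const_cone: "(\<delta>::real) > 0 \<Longrightarrow> (\<lambda>_. \<delta>) \<in> wedge_cone p"
  unfolding wedge_cone_def by auto

lemma step_cone: "(\<delta>::real) > 0 \<Longrightarrow> \<delta> \<le> 1 \<Longrightarrow> (\<lambda>j. if j \<le> i then 1 else \<delta>) \<in> wedge_cone p"
  unfolding wedge_cone_def by auto

lemma wn_ge: "(\<Sum>j=1..p. \<bar>\<beta> j\<bar>) \<le> wedge_norm p \<beta>"
  unfolding wedge_norm_def
proof (rule cInf_greatest)
  have c: "(\<lambda>_. 1::real) \<in> wedge_cone p" by (rule const_cone) simp
  have "(1/2) * (\<Sum>j=1..p. \<beta> j ^ 2 / (\<lambda>_. 1::real) j + (\<lambda>_. 1::real) j) \<in> {(1/2) * (\<Sum>j=1..p. \<beta> j ^ 2 / a j + a j) | a. a \<in> wedge_cone p}"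
    by (rule CollectI, rule exI[of _ "\<lambda>_. 1::real"]) (simp add: c)
  thus "{(1/2) * (\<Sum>j=1..p. \<beta> j ^ 2 / a j + a j) | a. a \<in> wedge_cone p} \<noteq> {}"
    by (metis empty_iff)
next
  fix x assume "x \<in> {(1/2) * (\<Sum>j=1..p. \<beta> j ^ 2 / a j + a j) | a. a \<in> wedge_cone p}"
  then obtain a where aa: "a \<in> wedge_cone p" "x = (1/2) * (\<Sum>j=1..p. \<beta> j ^ 2 / a j + a j)" by auto
  have "(\<Sum>j\<in>{1..p}. \<bar>\<beta> j\<bar>) \<le> (1/2)*(\<Sum>j\<in>{1..p}. \<beta> j^2/a j + a j)" by (rule sum_amgm) (use aa in auto)
  thus "(\<Sum>j=1..p. \<bar>\<beta> j\<bar>) \<le> x" using aa(2) by simp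
qed

lemma om_ge: "(\<Sum>j\<in>{s+1..p}. \<bar>\<beta> j\<bar>) \<le> Omega_c p s \<beta>"
  unfolding Omega_c_def
proof (rule cInf_greatest)
  have c: "(\<lambda>_. 1::real) \<in> wedge_cone p" by (rule const_cone) simp
  have "(1/2) * (\<Sum>j\<in>{s+1..p}. \<beta> j ^ 2 / (\<lambda>_. 1::real) j + (\<lambda>_. 1::real) j) \<in> {(1/2) * (\<Sum>j\<in>{s+1..p}. \<beta> j ^ 2 / a j + a j) | a. a \<in> wedge_cone p}"
    by (rule CollectI, rule exI[of _ "\<lambda>_. 1::real"]) (simp add: c)
  thus "{(1/2) * (\<Sum>j\<in>{s+1..p}. \<beta> j ^ 2 / a j + a j) | a. a \<in> wedge_cone p} \<noteq> {}"
    by (metis empty_iff)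
next
  fix x assume "x \<in> {(1/2) * (\<Sum>j\<in>{s+1..p}. \<beta> j ^ 2 / a j + a j) | a. a \<in> wedge_cone p}"
  then obtain a where aa: "a \<in> wedge_cone p" "x = (1/2) * (\<Sum>j\<in>{s+1..p}. \<beta> j ^ 2 / a j + a j)" by auto
  have "(\<Sum>j\<in>{s+1..p}. \<bar>\<beta> j\<bar>) \<le> (1/2)*(\<Sum>j\<in>{s+1..p}. \<beta> j^2/a j + a j)" by (rule sum_amgm) (use aa in auto)
  thus "(\<Sum>j\<in>{s+1..p}. \<bar>\<beta> j\<bar>) \<le> x" using aa(2) by simp
qed

lemma wn_le: assumes "a \<in> wedge_cone p"
  shows "wedge_norm p \<beta> \<le> (1/2) * (\<Sum>j=1..p. \<beta> j ^ 2 / a j + a j)"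
  unfolding wedge_norm_def
proof (rule cInf_lower)
  show "(1/2) * (\<Sum>j=1..p. \<beta> j ^ 2 / a j + a j) \<in> {(1/2) * (\<Sum>j=1..p. \<beta> j ^ 2 / a j + a j) | a. a \<in> wedge_cone p}"
    by (rule CollectI, rule exI[of _ a]) (simp add: assms)
  show "bdd_below {(1/2) * (\<Sum>j=1..p. \<beta> j ^ 2 / a j + a j) | a. a \<in> wedge_cone p}"
  proof (rule bdd_belowI[of _ 0])
    fix x assume "x \<in> {(1/2) * (\<Sum>j=1..p. \<beta> j ^ 2 / a j + a j) | a. a \<in> wedge_cone p}"
    then obtain a where aa: "a \<in> wedge_cone p" "x = (1/2) * (\<Sum>j=1..p. \<beta> j ^ 2 / a j + a j)" by auto
    moreover have "(\<Sum>j\<in>{1..p}. \<bar>\<beta> j\<bar>) \<le> (1/2)*(\<Sum>j\<in>{1..p}. \<beta> j^2/a j + a j)" by (rule sum_amgm) (use aa in auto)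
    moreover have "0 \<le> (\<Sum>j=1..p. \<bar>\<beta> j\<bar>)" by (simp add: sum_nonneg)
    ultimately show "0 \<le> x" by linarith
  qed
qed

lemma om_le: assumes "a \<in> wedge_cone p"
  shows "Omega_c p s \<beta> \<le> (1/2) * (\<Sum>j\<in>{s+1..p}. \<beta> j ^ 2 / a j + a j)"
  unfolding Omega_c_def
proof (rule cInf_lower)
  show "(1/2) * (\<Sum>j\<in>{s+1..p}. \<beta> j ^ 2 / a j + a j) \<in> {(1/2) * (\<Sum>j\<in>{s+1..p}. \<beta> j ^ 2 / a j + a j) | a. a \<in> wedge_cone p}"
    by (rule CollectI, rule exI[of _ a]) (simp add: assms)
  show "bdd_below {(1/2) * (\<Sum>j\<in>{s+1..p}. \<beta> j ^ 2 / a j + a j) | a. a \<in> wedge_cone p}"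
  proof (rule bdd_belowI[of _ 0])
    fix x assume "x \<in> {(1/2) * (\<Sum>j\<in>{s+1..p}. \<beta> j ^ 2 / a j + a j) | a. a \<in> wedge_cone p}"
    then obtain a where aa: "a \<in> wedge_cone p" "x = (1/2) * (\<Sum>j\<in>{s+1..p}. \<beta> j ^ 2 / a j + a j)" by auto
    moreover have "(\<Sum>j\<in>{s+1..p}. \<bar>\<beta> j\<bar>) \<le> (1/2)*(\<Sum>j\<in>{s+1..p}. \<beta> j^2/a j + a j)" by (rule sum_amgm) (use aa in auto)
    moreover have "0 \<le> (\<Sum>j\<in>{s+1..p}. \<bar>\<beta> j\<bar>)" by (simp add: sum_nonneg)
    moreover have "{s+1..p} \<subseteq> {1..p}" by auto
    ultimately show "0 \<le> x" by linarith
  qed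
qed

lemma ups_ge: assumes "s \<le> p" shows "(\<Sum>j=1..p. \<bar>\<beta> j\<bar>) \<le> Upsilon p s \<beta>"
proof -
  have U: "{1..p} = {1..s} \<union> {s+1..p}" using assms by auto
  have D: "{1..s} \<inter> {s+1..p} = {}" by auto
  have "(\<Sum>j=1..p. \<bar>restr {1..s} \<beta> j\<bar>) = (\<Sum>j=1..s. \<bar>restr {1..s} \<beta> j\<bar>) + (\<Sum>j\<in>{s+1..p}. \<bar>restr {1..s} \<beta> j\<bar>)"
    unfolding U by (rule sum.union_disjoint) (use D in auto)
  also have "\<dots> = (\<Sum>j=1..s. \<bar>\<beta> j\<bar>)" by (simp add: restr_def)
  finally have A: "(\<Sum>j=1..s. \<bar>\<beta> j\<bar>) \<le> wedge_norm p (restr {1..s} \<beta>)"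
    using wn_ge[where p=p and \<beta>="restr {1..s} \<beta>"] by simp
  have "(\<Sum>j=1..p. \<bar>\<beta> j\<bar>) = (\<Sum>j=1..s. \<bar>\<beta> j\<bar>) + (\<Sum>j\<in>{s+1..p}. \<bar>\<beta> j\<bar>)"
    unfolding U by (rule sum.union_disjoint) (use D in auto)
  thus ?thesis using A om_ge[where s=s and p=p and \<beta>=\<beta>] unfolding Upsilon_def by linarith
qed

lemma Bbar_l1: assumes "v \<in> Bbar p" shows "(\<Sum>j=1..p. \<bar>v j\<bar>) \<le> 1"
proof -
  obtain s where s: "s \<in> {1..p-1}" "v \<in> {\<beta> \<in> Rp p. Upsilon p s \<beta> \<le> 1}"
    using assms unfolding Bbar_def by (rule UN_E)
  have "s \<le> p" using s(1) by auto
  hence "(\<Sum>j=1..p. \<bar>v j\<bar>) \<le> Upsilon p s v" by (rule ups_ge)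
  thus ?thesis using s(2) by simp
qed

lemma flip_abs: "\<bar>flip J v j\<bar> = \<bar>v j\<bar>"
  by (simp add: flip_def restr_def)

lemma Bg_l1: assumes "v \<in> Bg p J" shows "(\<Sum>j=1..p. \<bar>v j\<bar>) \<le> 1"
proof -
  obtain n and c :: "nat \<Rightarrow> real" and w :: "nat \<Rightarrow> nat \<Rightarrow> real" where H: "\<forall>i<n. c i \<ge> 0 \<and> w i \<in> Bbar p \<union> flip J ` Bbar p"
    "(\<Sum>i<n. c i) = 1" "v = (\<lambda>j. \<Sum>i<n. c i * w i j)"
    using assms unfolding Bg_def conv_comb_def by blast
  have W: "(\<Sum>j=1..p. \<bar>w i j\<bar>) \<le> 1" if "i < n" for i
  proof -
    have "w i \<in> Bbar p \<or> w i \<in> flip J ` Bbar p" using H(1) that by blast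
    thus ?thesis
    proof
      assume "w i \<in> flip J ` Bbar p"
      then obtain u where "u \<in> Bbar p" "w i = flip J u" by blast
      thus ?thesis using Bbar_l1[of u p] by (simp add: flip_abs)
    qed (rule Bbar_l1)
  qed
  have "(\<Sum>j=1..p. \<bar>v j\<bar>) \<le> (\<Sum>j=1..p. \<Sum>i<n. c i * \<bar>w i j\<bar>)"
    unfolding H(3)
    by (rule sum_mono, rule order.trans[OF sum_abs], rule sum_mono) (use H(1) in \<open>simp add: abs_mult\<close>)
  also have "\<dots> = (\<Sum>i<n. c i * (\<Sum>j=1..p. \<bar>w i j\<bar>))"
    by (subst sum.swap) (simp add: sum_distrib_left)
  also have "\<dots> \<le> (\<Sum>i<n. c i)"
    by (rule sum_mono) (use H(1) W in \<open>simp add: mult_left_le\<close>)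
  finally show ?thesis using H(2) by simp
qed

definition unitv :: "nat \<Rightarrow> real \<Rightarrow> nat \<Rightarrow> real" where
  "unitv i \<sigma> = (\<lambda>j. if j = i then \<sigma> else 0)"

lemma eps_le: assumes "\<And>\<delta>::real. 0 < \<delta> \<Longrightarrow> \<delta> \<le> 1 \<Longrightarrow> u \<le> 1 + real p * \<delta>"
  shows "u \<le> 1"
proof (rule ccontr)
  assume "\<not> u \<le> 1"
  define \<delta> where "\<delta> = min 1 ((u - 1) / (2 * (real p + 1)))"
  have "0 < \<delta>" "\<delta> \<le> 1" using \<open>\<not> u \<le> 1\<close> by (auto simp: \<delta>_def)
  hence "u \<le> 1 + real p * \<delta>" by (rule assms)
  moreover have "real p * \<delta> \<le> real p * ((u - 1) / (2 * (real p + 1)))"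
    by (rule mult_left_mono) (auto simp: \<delta>_def)
  moreover have "real p * ((u - 1) / (2 * (real p + 1))) < u - 1"
  proof -
    have pos: "0 < 2 * (real p + 1)" by simp
    have h: "(u - 1) * real p < (u - 1) * (2 * (real p + 1))"
      by (rule mult_strict_left_mono) (use \<open>\<not> u \<le> 1\<close> in auto)
    have "real p * ((u - 1) / (2 * (real p + 1))) = ((u - 1) * real p) / (2 * (real p + 1))" by simp
    also have "\<dots> < u - 1" using h pos by (simp add: pos_divide_less_eq mult.commute)
    finally show ?thesis .
  qed
  ultimately show False by linarith
qed


lemma term_bd:
  assumes "i \<le> j" "0 < \<delta>" "\<delta> \<le> 1" "\<sigma>^2 \<le> 1"
  shows "(unitv i \<sigma> j)^2/(if j \<le> i then 1 else \<delta>) + (if j \<le> i then 1 else \<delta>) \<le> (if j = i then 2 else 0) + \<delta>"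
proof (cases "j = i")
  case True thus ?thesis using assms by (simp add: unitv_def)
next
  case False hence "j > i" using assms(1) by simp
  thus ?thesis using False by (simp add: unitv_def)
qed

lemma sum_bd:
  assumes "A \<subseteq> {i..p}" "0 < \<delta>" "\<delta> \<le> 1" "\<sigma>^2 \<le> 1" "1 \<le> i"
  shows "(\<Sum>j\<in>A. (unitv i \<sigma> j)^2/(if j \<le> i then 1 else \<delta>) + (if j \<le> i then 1 else \<delta>))
     \<le> (if i \<in> A then 2 else 0) + real p * \<delta>"
proof -
  have fin: "finite A" using assms(1) finite_subset by blast
  have "(\<Sum>j\<in>A. (unitv i \<sigma> j)^2/(if j \<le> i then 1 else \<delta>) + (if j \<le> i then 1 else \<delta>))
     \<le> (\<Sum>j\<in>A. (if j = i then 2 else 0) + \<delta>)"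
    by (rule sum_mono, rule term_bd) (use assms in auto)
  also have "\<dots> = (if i \<in> A then 2 else 0) + real (card A) * \<delta>"
    using fin by (simp add: sum.distrib sum.delta')
  also have "real (card A) \<le> real p"
  proof -
    have "card A \<le> card {i..p}" by (rule card_mono) (use assms in auto)
    also have "\<dots> \<le> p" using assms(5) by simp
    finally show ?thesis by simp
  qed
  hence "(if i \<in> A then 2 else 0) + real (card A) * \<delta> \<le> (if i \<in> A then 2 else 0) + real p * \<delta>"
    using assms(2) by (simp add: mult_right_mono)
  finally show ?thesis .
qed

lemma unit_Bbar:
  assumes "p \<ge> 2" "i \<in> {1..p}" "\<sigma>^2 \<le> 1"
  shows "unitv i \<sigma> \<in> Bbar p"
proof -
  have R: "unitv i \<sigma> \<in> Rp p" using assms(2) unfolding Rp_def unitv_def by auto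
  show ?thesis
  proof (cases "i = 1")
    case True
    have "Upsilon p 1 (unitv i \<sigma>) \<le> 1"
    proof (rule eps_le)
      fix \<delta> :: real assume d: "0 < \<delta>" "\<delta> \<le> 1"
      have a: "(\<lambda>j. if j \<le> i then 1 else \<delta>) \<in> wedge_cone p" by (rule step_cone) (use d in auto)
      have rr: "restr {1..1} (unitv i \<sigma>) = unitv i \<sigma>"
        using True by (auto simp: restr_def unitv_def)
      have "wedge_norm p (unitv i \<sigma>) \<le> (1/2) * (\<Sum>j=1..p. (unitv i \<sigma> j)^2/(if j \<le> i then 1 else \<delta>) + (if j \<le> i then 1 else \<delta>))"
        using wn_le[OF a] by simp
      also have "\<dots> \<le> (1/2) * ((if i \<in> {1..p} then 2 else 0) + real p * \<delta>)"
        by (rule mult_left_mono, rule sum_bd) (use d assms True in auto)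
      finally have W: "wedge_norm p (unitv i \<sigma>) \<le> (1/2) * (2 + real p * \<delta>)" using assms by simp
      have "Omega_c p 1 (unitv i \<sigma>) \<le> (1/2) * (\<Sum>j\<in>{1+1..p}. (unitv i \<sigma> j)^2/(if j \<le> i then 1 else \<delta>) + (if j \<le> i then 1 else \<delta>))"
        using om_le[OF a] by simp
      also have "\<dots> \<le> (1/2) * ((if i \<in> {1+1..p} then 2 else 0) + real p * \<delta>)"
        by (rule mult_left_mono, rule sum_bd) (use d assms True in auto)
      finally have O: "Omega_c p 1 (unitv i \<sigma>) \<le> (1/2) * (real p * \<delta>)" using True by simp
      show "Upsilon p 1 (unitv i \<sigma>) \<le> 1 + real p * \<delta>"
        unfolding Upsilon_def rr using W O by simp
    qed
    moreover have "(1::nat) \<in> {1..p-1}" using assms by auto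
    ultimately show ?thesis using R unfolding Bbar_def by blast
  next
    case False
    hence i2: "i \<ge> 2" using assms by auto
    have "Upsilon p (i-1) (unitv i \<sigma>) \<le> 1"
    proof (rule eps_le)
      fix \<delta> :: real assume d: "0 < \<delta>" "\<delta> \<le> 1"
      have a: "(\<lambda>j. if j \<le> i then 1 else \<delta>) \<in> wedge_cone p" by (rule step_cone) (use d in auto)
      have rr: "restr {1..i-1} (unitv i \<sigma>) = (\<lambda>_. 0)"
        by (rule ext) (use i2 in \<open>auto simp: restr_def unitv_def\<close>)
      have "wedge_norm p (\<lambda>_. 0) \<le> (1/2) * (\<Sum>j=1..p. (0::real)^2/\<delta> + \<delta>)"
        using wn_le[OF const_cone[OF d(1)], where \<beta>="\<lambda>_. 0"] by simp
      also have "\<dots> = (1/2) * (real p * \<delta>)" using d by simp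
      finally have W: "wedge_norm p (\<lambda>_. 0) \<le> (1/2) * (real p * \<delta>)" .
      have ii: "i - 1 + 1 = i" using i2 by simp
      have "Omega_c p (i-1) (unitv i \<sigma>) \<le> (1/2) * (\<Sum>j\<in>{i-1+1..p}. (unitv i \<sigma> j)^2/(if j \<le> i then 1 else \<delta>) + (if j \<le> i then 1 else \<delta>))"
        using om_le[OF a] by simp
      also have "\<dots> \<le> (1/2) * ((if i \<in> {i..p} then 2 else 0) + real p * \<delta>)"
        unfolding ii by (rule mult_left_mono, rule sum_bd) (use d assms in auto)
      finally have O: "Omega_c p (i-1) (unitv i \<sigma>) \<le> (1/2) * (2 + real p * \<delta>)" using assms by simp
      show "Upsilon p (i-1) (unitv i \<sigma>) \<le> 1 + real p * \<delta>"
        unfolding Upsilon_def rr using W O by simp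
    qed
    moreover have "i - 1 \<in> {1..p-1}" using assms i2 by auto
    ultimately show ?thesis using R unfolding Bbar_def by blast
  qed
qed


lemma Bg_contains:
  assumes "p \<ge> 2" "y \<in> Rp p" "(\<Sum>j=1..p. \<bar>y j\<bar>) \<le> 1"
  shows "y \<in> Bg p J"
proof -
  define L where "L = (\<Sum>j=1..p. \<bar>y j\<bar>)"
  define c where "c = (\<lambda>i::nat. if i = 0 then 1 - L else \<bar>y i\<bar>)"
  define v where "v = (\<lambda>i::nat. if i = 0 then unitv 1 0 else unitv i (sgn (y i)))"
  have I: "{..<Suc p} = insert 0 {1..p}" by auto
  have 1: "\<forall>i<Suc p. c i \<ge> 0 \<and> v i \<in> Bbar p \<union> flip J ` Bbar p"
  proof (intro allI impI)
    fix i assume "i < Suc p"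
    show "c i \<ge> 0 \<and> v i \<in> Bbar p \<union> flip J ` Bbar p"
    proof (cases "i = 0")
      case True
      have "unitv 1 0 \<in> Bbar p" by (rule unit_Bbar) (use assms in auto)
      thus ?thesis using True assms(3) by (simp add: c_def v_def L_def)
    next
      case False
      have "(sgn (y i))^2 \<le> 1" by (simp add: sgn_if)
      hence "unitv i (sgn (y i)) \<in> Bbar p" by (intro unit_Bbar) (use assms False \<open>i < Suc p\<close> in auto)
      thus ?thesis using False by (simp add: c_def v_def)
    qed
  qed
  have 2: "(\<Sum>i<Suc p. c i) = 1"
    unfolding I by (simp add: c_def L_def)
  have 3: "y = (\<lambda>j. \<Sum>i<Suc p. c i * v i j)"
  proof
    fix j
    have "(\<Sum>i<Suc p. c i * v i j) = (\<Sum>i\<in>{1..p}. c i * v i j)"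
      unfolding I by (simp add: v_def unitv_def)
    also have "\<dots> = (\<Sum>i\<in>{1..p}. if i = j then y j else 0)"
      by (rule sum.cong) (auto simp: c_def v_def unitv_def abs_mult_sgn)
    also have "\<dots> = (if j \<in> {1..p} then y j else 0)" by (simp add: sum.delta')
    also have "\<dots> = y j" using assms(2) unfolding Rp_def by auto
    finally show "y j = (\<Sum>i<Suc p. c i * v i j)" by simp
  qed
  show ?thesis unfolding Bg_def conv_comb_def
    apply (rule CollectI)
    apply (rule exI[of _ "Suc p"])
    apply (rule exI[of _ c])
    apply (rule exI[of _ v])
    apply (intro conjI)
      apply (fact 1)
     apply (fact 2)
    apply (fact 3)
    done
qed

theorem lemma6:
  fixes p :: nat and J :: "nat set" and \<beta> :: "nat \<Rightarrow> real"
  assumes "p \<ge> 2" and "J \<subseteq> {1..p}" and "\<beta> \<in> Rp p"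
  shows "gauge_g p J \<beta> = (\<Sum>j=1..p. \<bar>\<beta> j\<bar>)"
proof -
  define L where "L = (\<Sum>j=1..p. \<bar>\<beta> j\<bar>)"
  define S where "S = {t. t > 0 \<and> \<beta> \<in> (\<lambda>v. (\<lambda>j. t * v j)) ` Bg p J}"
  have L0: "L \<ge> 0" unfolding L_def by (simp add: sum_nonneg)
  have low: "L \<le> t" if "t \<in> S" for t
  proof -
    have t0: "t > 0" and b: "\<beta> \<in> (\<lambda>v. (\<lambda>j. t * v j)) ` Bg p J" using that unfolding S_def by auto
    obtain v where v: "v \<in> Bg p J" "\<beta> = (\<lambda>j. t * v j)" using b by (rule imageE)
    have "L = t * (\<Sum>j=1..p. \<bar>v j\<bar>)" unfolding L_def v(2) using t0
      by (simp add: abs_mult sum_distrib_left)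
    also have "\<dots> \<le> t * 1" by (rule mult_left_mono) (use Bg_l1[OF v(1)] t0 in auto)
    finally show ?thesis by simp
  qed
  have up: "t \<in> S" if "t > L" for t
  proof -
    have t0: "t > 0" using that L0 by linarith
    define y where "y = (\<lambda>j. \<beta> j / t)"
    have yR: "y \<in> Rp p" using assms(3) unfolding Rp_def y_def by auto
    have "(\<Sum>j=1..p. \<bar>y j\<bar>) = L / t" unfolding y_def L_def using t0
      by (simp add: sum_divide_distrib)
    also have "\<dots> \<le> 1" using that t0 by simp
    finally have "y \<in> Bg p J" by (intro Bg_contains[OF assms(1) yR])
    moreover have "\<beta> = (\<lambda>j. t * y j)" unfolding y_def using t0 by auto
    ultimately show ?thesis unfolding S_def using t0 by blast
  qed
  have bdd: "bdd_below S" using low by (rule bdd_belowI)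
  have ge: "L \<le> Inf S"
    by (rule cInf_greatest) (use up[of "L+1"] low in auto)
  have le: "Inf S \<le> L"
  proof (rule ccontr)
    assume "\<not> Inf S \<le> L"
    hence "(L + Inf S)/2 > L" by simp
    hence "(L + Inf S)/2 \<in> S" by (rule up)
    hence "Inf S \<le> (L + Inf S)/2" using bdd by (rule cInf_lower)
    thus False using \<open>\<not> Inf S \<le> L\<close> by simp
  qed
  have "gauge_g p J \<beta> = Inf S" unfolding gauge_g_def S_def by simp
  thus ?thesis using ge le unfolding L_def by simp
qed

end
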